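(* The monads $\mathbb J=(J,\eta,\psi)$ and $\mathbb I=(I,\eta,\zeta)$ are not isomorphic; that is, there is no natural isomorphism $k\colon I\to J$ of functors with $k\circ\eta=\eta$ and $k_X\circ\zeta_X=\psi_X\circ J(k_X)\circ k_{I(X)}$ for all $X$.
   Context: A max-min measure on a compact Hausdorff space $X$ is a functional $\mu\colon C(X)\to\mathbb R$ (not assumed continuous) with $\mu(c_X)=c$ for constants, $\mu(\varphi\vee\psi)=\mu(\varphi)\vee\mu(\psi)$, $\mu(c\wedge\varphi)=c\wedge\mu(\varphi)$ for $c\in\mathbb R$. A max-plus (idempotent) measure is a functional $\mu\colon C(X)\to\mathbb R$ with $\mu(c_X)=c$, $\mu(\varphi\vee\psi)=\mu(\varphi)\vee\mu(\psi)$, $\mu(c_X+\varphi)=c+\mu(\varphi)$. $J(X)$, $I(X)$ are the respective sets with the topology of pointwise convergence on $C(X)$; on maps, $J(f)(\mu)=\mu(\cdot\circ f)$, $I(f)(\mu)=\mu(\cdot\circ f)$. In both monads the unit is $\eta_X(x)=\delta_x$, $\delta_x(\varphi)=\varphi(x)$. The multiplications are $\psi_X\colon J(J(X))\to J(X)$, $\psi_X(M)(\varphi)=M(\bar\varphi)$, and $\zeta_X\colon I(I(X))\to I(X)$, $\zeta_X(M)(\varphi)=M(\bar\varphi)$, where $\bar\varphi(\mu)=\mu(\varphi)$; in particular $\zeta_X(\vee_{i=1}^n(\beta_i+\delta_{\mu_i}))=\vee_{i=1}^n(\beta_i+\mu_i)$ for $\beta_i\in[-\infty,0]$ with $\max_i\beta_i=0$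 and $\mu_i\in I(X)$, and $\psi_X(\vee_{i=1}^n(\alpha_i\wedge\delta_{\mu_i}))=\vee_{i=1}^n(\alpha_i\wedge\mu_i)$ for $\alpha_i\in\mathbb R\cup\{\infty\}$ with $\max_i\alpha_i=\infty$, $\mu_i\in J(X)$. The monads are considered on the category $\mathbf{Comp}$ of compact Hausdorff spaces. *)

theory Defs
  imports "HOL-Analysis.Analysis" "HOL-Library.Infinite_Typeclass"
begin

definition CH :: "'a topology \<Rightarrow> bool" where
  "CH X \<longleftrightarrow> compact_space X \<and> Hausdorff_space X"

text \<open>C(X): continuous real functions on X, normalised to be extensional on the
  carrier, so that distinct elements are distinct functions on the space.\<close>
definition Cfun :: "'a topology \<Rightarrow> ('a \<Rightarrow> real) set" where
  "Cfun X = {\<phi>. continuous_map X euclideanreal \<phi> \<and> \<phi> \<in> extensional (topspace X)}"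

definition constX :: "'a topology \<Rightarrow> real \<Rightarrow> ('a \<Rightarrow> real)" where
  "constX X c = restrict (\<lambda>_. c) (topspace X)"

definition supX :: "'a topology \<Rightarrow> ('a \<Rightarrow> real) \<Rightarrow> ('a \<Rightarrow> real) \<Rightarrow> ('a \<Rightarrow> real)" where
  "supX X \<phi> \<psi> = restrict (\<lambda>x. max (\<phi> x) (\<psi> x)) (topspace X)"

definition addX :: "'a topology \<Rightarrow> real \<Rightarrow> ('a \<Rightarrow> real) \<Rightarrow> ('a \<Rightarrow> real)" where
  "addX X c \<phi> = restrict (\<lambda>x. c + \<phi> x) (topspace X)"

definition minX :: "'a topology \<Rightarrow> real \<Rightarrow> ('a \<Rightarrow> real) \<Rightarrow> ('a \<Rightarrow> real)" where
  "minX X c \<phi> = restrict (\<lambda>x. min c (\<phi> x)) (topspace X)"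

definition Imeas :: "'a topology \<Rightarrow> (('a \<Rightarrow> real) \<Rightarrow> real) set" where
  "Imeas X = {\<mu>. \<mu> \<in> extensional (Cfun X) \<and>
     (\<forall>c. \<mu> (constX X c) = c) \<and>
     (\<forall>\<phi>\<in>Cfun X. \<forall>\<psi>\<in>Cfun X. \<mu> (supX X \<phi> \<psi>) = max (\<mu> \<phi>) (\<mu> \<psi>)) \<and>
     (\<forall>c. \<forall>\<phi>\<in>Cfun X. \<mu> (addX X c \<phi>) = c + \<mu> \<phi>)}"

definition Jmeas :: "'a topology \<Rightarrow> (('a \<Rightarrow> real) \<Rightarrow> real) set" where
  "Jmeas X = {\<mu>. \<mu> \<in> extensional (Cfun X) \<and>
     (\<forall>c. \<mu> (constX X c) = c) \<and>
     (\<forall>\<phi>\<in>Cfun X. \<forall>\<psi>\<in>Cfun X. \<mu> (supX X \<phi> \<psi>) = max (\<mu> \<phi>) (\<mu> \<psi>)) \<and>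
     (\<forall>c. \<forall>\<phi>\<in>Cfun X. \<mu> (minX X c \<phi>) = min c (\<mu> \<phi>))}"

definition IT :: "'a topology \<Rightarrow> (('a \<Rightarrow> real) \<Rightarrow> real) topology" where
  "IT X = subtopology (product_topology (\<lambda>_. euclideanreal) (Cfun X)) (Imeas X)"

definition JT :: "'a topology \<Rightarrow> (('a \<Rightarrow> real) \<Rightarrow> real) topology" where
  "JT X = subtopology (product_topology (\<lambda>_. euclideanreal) (Cfun X)) (Jmeas X)"

definition push :: "'a topology \<Rightarrow> 'b topology \<Rightarrow> ('a \<Rightarrow> 'b)
    \<Rightarrow> (('a \<Rightarrow> real) \<Rightarrow> real) \<Rightarrow> (('b \<Rightarrow> real) \<Rightarrow> real)" where
  "push X Y f \<mu> = restrict (\<lambda>\<phi>. \<mu> (restrict (\<phi> \<circ> f) (topspace X))) (Cfun Y)"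

definition dirac :: "'a topology \<Rightarrow> 'a \<Rightarrow> (('a \<Rightarrow> real) \<Rightarrow> real)" where
  "dirac X x = restrict (\<lambda>\<phi>. \<phi> x) (Cfun X)"

definition zeta :: "'a topology \<Rightarrow> (((('a \<Rightarrow> real) \<Rightarrow> real) \<Rightarrow> real) \<Rightarrow> real)
    \<Rightarrow> (('a \<Rightarrow> real) \<Rightarrow> real)" where
  "zeta X M = restrict (\<lambda>\<phi>. M (restrict (\<lambda>\<mu>. \<mu> \<phi>) (Imeas X))) (Cfun X)"

definition psi :: "'a topology \<Rightarrow> (((('a \<Rightarrow> real) \<Rightarrow> real) \<Rightarrow> real) \<Rightarrow> real)
    \<Rightarrow> (('a \<Rightarrow> real) \<Rightarrow> real)" where
  "psi X M = restrict (\<lambda>\<phi>. M (restrict (\<lambda>\<mu>. \<mu> \<phi>) (Jmeas X))) (Cfun X)"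

definition iso_unit_family ::
  "('a topology \<Rightarrow> (('a \<Rightarrow> real) \<Rightarrow> real) \<Rightarrow> (('a \<Rightarrow> real) \<Rightarrow> real)) \<Rightarrow> bool" where
  "iso_unit_family k \<longleftrightarrow> (\<forall>X. CH X \<longrightarrow>
      homeomorphic_map (IT X) (JT X) (k X) \<and>
      (\<forall>x\<in>topspace X. k X (dirac X x) = dirac X x))"

definition natural ::
  "('a topology \<Rightarrow> (('a \<Rightarrow> real) \<Rightarrow> real) \<Rightarrow> (('a \<Rightarrow> real) \<Rightarrow> real))
   \<Rightarrow> ('b topology \<Rightarrow> (('b \<Rightarrow> real) \<Rightarrow> real) \<Rightarrow> (('b \<Rightarrow> real) \<Rightarrow> real)) \<Rightarrow> bool" where
  "natural k1 k2 \<longleftrightarrow> (\<forall>X Y f. CH X \<and> CH Y \<and> continuous_map X Y f \<longrightarrow>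
      (\<forall>\<mu>\<in>Imeas X. k2 Y (push X Y f \<mu>) = push X Y f (k1 X \<mu>)))"

end

theory Submission
  imports Defs
begin

lemma Cfun_disc: "Cfun (discrete_topology S) = extensional S"
  by (auto simp: Cfun_def)

lemma tsP: "topspace (product_topology (\<lambda>_. euclideanreal) I) = extensional I"
  by (auto simp: PiE_def)

lemma ts_IT: "topspace (IT X) = Imeas X"
  by (auto simp: IT_def Imeas_def PiE_def)

lemma ts_JT: "topspace (JT X) = Jmeas X"
  by (auto simp: JT_def Jmeas_def PiE_def)

lemma supX_eq_right:
  assumes "\<psi> \<in> Cfun X" "\<And>x. x \<in> topspace X \<Longrightarrow> \<phi> x \<le> \<psi> x"
  shows "supX X \<phi> \<psi> = \<psi>"
proof
  fix x show "supX X \<phi> \<psi> x = \<psi> x"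
    using assms by (cases "x \<in> topspace X") (auto simp: supX_def Cfun_def extensional_def max_def)
qed

lemma mono_I:
  assumes "\<mu> \<in> Imeas X" "\<phi> \<in> Cfun X" "\<psi> \<in> Cfun X" "\<And>x. x \<in> topspace X \<Longrightarrow> \<phi> x \<le> \<psi> x"
  shows "\<mu> \<phi> \<le> \<mu> \<psi>"
proof -
  have "\<mu> (supX X \<phi> \<psi>) = max (\<mu> \<phi>) (\<mu> \<psi>)" using assms by (auto simp: Imeas_def)
  moreover have "supX X \<phi> \<psi> = \<psi>" by (rule supX_eq_right[OF assms(3,4)])
  ultimately show ?thesis by (metis max.cobounded1)
qed

lemma mono_J:
  assumes "\<mu> \<in> Jmeas X" "\<phi> \<in> Cfun X" "\<psi> \<in> Cfun X" "\<And>x. x \<in> topspace X \<Longrightarrow> \<phi> x \<le> \<psi> x"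
  shows "\<mu> \<phi> \<le> \<mu> \<psi>"
proof -
  have "\<mu> (supX X \<phi> \<psi>) = max (\<mu> \<phi>) (\<mu> \<psi>)" using assms by (auto simp: Jmeas_def)
  moreover have "supX X \<phi> \<psi> = \<psi>" by (rule supX_eq_right[OF assms(3,4)])
  ultimately show ?thesis by (metis max.cobounded1)
qed

lemma constX_Cfun: "constX X c \<in> Cfun X"
  by (auto simp: Cfun_def constX_def intro: continuous_map_eq[OF continuous_map_const[THEN iffD2]])

lemma supX_Cfun: "\<phi> \<in> Cfun X \<Longrightarrow> \<psi> \<in> Cfun X \<Longrightarrow> supX X \<phi> \<psi> \<in> Cfun X"
  unfolding Cfun_def supX_def
  by (auto intro: continuous_map_eq[OF continuous_map_real_max])

lemma addX_Cfun: "\<phi> \<in> Cfun X \<Longrightarrow> addX X c \<phi> \<in> Cfun X"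
  unfolding Cfun_def addX_def
  by (auto intro: continuous_map_eq[OF continuous_map_add[OF continuous_map_const[THEN iffD2]]])

lemma minX_Cfun: "\<phi> \<in> Cfun X \<Longrightarrow> minX X c \<phi> \<in> Cfun X"
  unfolding Cfun_def minX_def
  by (auto intro: continuous_map_eq[OF continuous_map_real_min[OF continuous_map_const[THEN iffD2]]])

lemma two_meas_I:
  assumes "p \<in> topspace Z" "q \<in> topspace Z" "t \<le> 0"
  shows "restrict (\<lambda>\<Phi>. max (\<Phi> p) (t + \<Phi> q)) (Cfun Z) \<in> Imeas Z"
  using assms constX_Cfun[of Z] supX_Cfun[of _ Z] addX_Cfun[of _ Z]
  unfolding Imeas_def
  by (auto simp: constX_def supX_def addX_def)

lemma closed_eqs:
  assumes "\<And>i. i \<in> I \<Longrightarrow> continuous_map T euclideanreal (F i)"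
    "\<And>i. i \<in> I \<Longrightarrow> continuous_map T euclideanreal (G i)"
  shows "closedin T {x \<in> topspace T. \<forall>i\<in>I. F i x = G i x}"
proof (cases "I = {}")
  case True then show ?thesis by simp
next
  case False
  have "{x \<in> topspace T. \<forall>i\<in>I. F i x = G i x} = \<Inter> ((\<lambda>i. {x\<in>topspace T. F i x = G i x}) ` I)"
    using False by auto
  moreover have "closedin T (\<Inter> ((\<lambda>i. {x\<in>topspace T. F i x = G i x}) ` I))"
  proof (rule closedin_Inter)
    show "(\<lambda>i. {x \<in> topspace T. F i x = G i x}) ` I \<noteq> {}" using False by simp
  next
    fix S assume "S \<in> (\<lambda>i. {x \<in> topspace T. F i x = G i x}) ` I"
    then obtain i where "i \<in> I" "S = {x \<in> topspace T. F i x = G i x}" by blast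
    then show "closedin T S" using assms closedin_continuous_maps_eq[of euclideanreal T "F i" "G i"] by simp
  qed
  ultimately show ?thesis by simp
qed

lemma J_two:
  assumes ab: "a \<noteq> b" and X: "X = discrete_topology {a,b}" and nu: "\<nu> \<in> Jmeas X" and phi: "\<phi> \<in> Cfun X"
  shows "\<nu> (restrict (\<lambda>x. if x = a then \<phi> a else \<nu> \<phi>) {a,b}) = \<nu> \<phi>"
proof -
  define c where "c = \<nu> \<phi>"
  define h where "h = restrict (\<lambda>x. if x = a then \<phi> a else c) {a,b}"
  have ts: "topspace X = {a,b}" using X by simp
  have CX: "Cfun X = extensional {a,b}" using X Cfun_disc by simp
  have cst: "\<nu> (constX X r) = r" for r using nu by (simp add: Jmeas_def)
  have "\<nu> (constX X (min (\<phi> a) (\<phi> b))) \<le> \<nu> \<phi>"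
    by (rule mono_J[OF nu constX_Cfun phi]) (auto simp: ts constX_def)
  then have lo: "min (\<phi> a) (\<phi> b) \<le> c" using cst by (simp add: c_def)
  have "\<nu> \<phi> \<le> \<nu> (constX X (max (\<phi> a) (\<phi> b)))"
    by (rule mono_J[OF nu phi constX_Cfun]) (auto simp: ts constX_def)
  then have hi: "c \<le> max (\<phi> a) (\<phi> b)" using cst by (simp add: c_def)
  have phie: "\<phi> \<in> extensional {a,b}" using phi CX by simp
  have "\<nu> h = c"
  proof (cases "\<phi> a \<le> c")
    case True
    show ?thesis
    proof (cases "c \<le> \<phi> b")
      case True2: True
      have "h = minX X c \<phi>"
        using True True2 phie ts by (auto simp: h_def minX_def extensional_def fun_eq_iff min_def)
      then show ?thesis using nu phi by (simp add: Jmeas_def c_def)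
    next
      case False
      then have "\<phi> a = c" using True hi by (auto simp: max_def split: if_splits)
      then have "h = constX X c"
        using ts by (auto simp: h_def constX_def fun_eq_iff)
      then show ?thesis using cst by simp
    qed
  next
    case False
    then have vb: "\<phi> b \<le> c" using lo by (auto simp: min_def split: if_splits)
    have "h = supX X \<phi> (constX X c)"
      using False vb phie ts by (auto simp: h_def supX_def constX_def extensional_def fun_eq_iff max_def)
    then show ?thesis using nu phi constX_Cfun[of X c] cst by (simp add: Jmeas_def c_def)
  qed
  then show ?thesis unfolding h_def c_def .
qed


lemma CH_IT_disc:
  assumes fin: "finite S" and X: "X = discrete_topology S"
  shows "CH (IT X)"
proof -
  define P where "P = product_topology (\<lambda>_::('a \<Rightarrow> real). euclideanreal) (Cfun X)"
  have ITP: "IT X = subtopology P (Imeas X)" by (simp add: IT_def P_def)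
  have tsP': "topspace P = extensional (Cfun X)" unfolding P_def by (rule tsP)
  have haus: "Hausdorff_space (IT X)"
    unfolding ITP P_def
    by (rule Hausdorff_space_subtopology) (simp add: Hausdorff_space_product_topology)
  have ts: "topspace X = S" using X by simp
  define B where "B \<phi> = (\<Sum>y\<in>S. \<bar>\<phi> y\<bar>)" for \<phi> :: "'a \<Rightarrow> real"
  have Bb: "\<bar>\<phi> x\<bar> \<le> B \<phi>" if "x \<in> S" for \<phi> x
    unfolding B_def using fin that by (intro member_le_sum) auto
  define K where "K = PiE (Cfun X) (\<lambda>\<phi>. {- B \<phi> .. B \<phi>})"
  have cK: "compactin P K" unfolding K_def P_def
    by (simp add: compactin_PiE compactin_euclidean_iff)
  have sub: "Imeas X \<subseteq> K"
  proof
    fix \<mu> assume mu: "\<mu> \<in> Imeas X"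
    have cst: "\<mu> (constX X r) = r" for r using mu by (simp add: Imeas_def)
    have "\<mu> \<phi> \<in> {- B \<phi> .. B \<phi>}" if phi: "\<phi> \<in> Cfun X" for \<phi>
    proof -
      have Bx: "- B \<phi> \<le> \<phi> x \<and> \<phi> x \<le> B \<phi>" if "x \<in> topspace X" for x
        using Bb[of x \<phi>] ts that by (auto simp: abs_le_iff)
      have "\<mu> (constX X (- B \<phi>)) \<le> \<mu> \<phi>"
        by (rule mono_I[OF mu constX_Cfun phi]) (use Bx in \<open>auto simp: constX_def\<close>)
      moreover have "\<mu> \<phi> \<le> \<mu> (constX X (B \<phi>))"
        by (rule mono_I[OF mu phi constX_Cfun]) (use Bx in \<open>auto simp: constX_def\<close>)
      ultimately show ?thesis using cst by simp
    qed
    moreover have "\<mu> \<in> extensional (Cfun X)" using mu by (simp add: Imeas_def)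
    ultimately show "\<mu> \<in> K" unfolding K_def by (auto simp: PiE_def extensional_def)
  qed
  have proj: "continuous_map P euclideanreal (\<lambda>\<mu>. \<mu> \<phi>)" if "\<phi> \<in> Cfun X" for \<phi>
    unfolding P_def using continuous_map_product_projection[OF that, of "\<lambda>_. euclideanreal"] by simp
  have c1: "closedin P {\<mu> \<in> topspace P. \<forall>c\<in>UNIV. (\<lambda>c \<mu>. \<mu> (constX X c)) c \<mu> = (\<lambda>c \<mu>. c) c \<mu>}"
    by (rule closed_eqs) (auto intro: proj constX_Cfun)
  have c2: "closedin P {\<mu> \<in> topspace P. \<forall>p\<in>Cfun X \<times> Cfun X.
      (\<lambda>p \<mu>. \<mu> (supX X (fst p) (snd p))) p \<mu> = (\<lambda>p \<mu>. max (\<mu> (fst p)) (\<mu> (snd p))) p \<mu>}"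
    by (rule closed_eqs) (auto intro!: proj supX_Cfun continuous_map_real_max)
  have c3: "closedin P {\<mu> \<in> topspace P. \<forall>p\<in>UNIV \<times> Cfun X.
      (\<lambda>p \<mu>. \<mu> (addX X (fst p) (snd p))) p \<mu> = (\<lambda>p \<mu>. fst p + \<mu> (snd p)) p \<mu>}"
    by (rule closed_eqs) (auto intro!: proj addX_Cfun continuous_map_add)
  have eq: "Imeas X = {\<mu> \<in> topspace P. \<forall>c\<in>UNIV. (\<lambda>c \<mu>. \<mu> (constX X c)) c \<mu> = (\<lambda>c \<mu>. c) c \<mu>}
     \<inter> {\<mu> \<in> topspace P. \<forall>p\<in>Cfun X \<times> Cfun X.
      (\<lambda>p \<mu>. \<mu> (supX X (fst p) (snd p))) p \<mu> = (\<lambda>p \<mu>. max (\<mu> (fst p)) (\<mu> (snd p))) p \<mu>}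
     \<inter> {\<mu> \<in> topspace P. \<forall>p\<in>UNIV \<times> Cfun X.
      (\<lambda>p \<mu>. \<mu> (addX X (fst p) (snd p))) p \<mu> = (\<lambda>p \<mu>. fst p + \<mu> (snd p)) p \<mu>}"
    unfolding tsP' Imeas_def by auto
  have "closedin P (Imeas X)" unfolding eq using c1 c2 c3 by (intro closedin_Int)
  then have "compactin P (Imeas X)" using closed_compactin[OF cK sub] by simp
  then have "compact_space (IT X)" unfolding ITP by (rule compact_space_subtopology)
  with haus show ?thesis by (simp add: CH_def)
qed

lemma proj_Cfun_I: "\<phi> \<in> Cfun X \<Longrightarrow> restrict (\<lambda>\<mu>. \<mu> \<phi>) (Imeas X) \<in> Cfun (IT X)"
  unfolding Cfun_def[of "IT X"] ts_IT
  by (auto simp: IT_def intro!: continuous_map_eq[OF continuous_map_from_subtopology[OF continuous_map_product_projection]])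

lemma proj_Cfun_J: "\<phi> \<in> Cfun X \<Longrightarrow> restrict (\<lambda>\<mu>. \<mu> \<phi>) (Jmeas X) \<in> Cfun (JT X)"
  unfolding Cfun_def[of "JT X"] ts_JT
  by (auto simp: JT_def intro!: continuous_map_eq[OF continuous_map_from_subtopology[OF continuous_map_product_projection]])

lemma comp_Cfun: "continuous_map A B f \<Longrightarrow> \<Phi> \<in> Cfun B \<Longrightarrow> restrict (\<Phi> \<circ> f) (topspace A) \<in> Cfun A"
  unfolding Cfun_def
  by (auto intro: continuous_map_eq[OF continuous_map_compose])

theorem mainTheorem17:
  fixes k :: "('a::infinite) topology \<Rightarrow> (('a \<Rightarrow> real) \<Rightarrow> real) \<Rightarrow> (('a \<Rightarrow> real) \<Rightarrow> real)"
    and k' :: "(('a \<Rightarrow> real) \<Rightarrow> real) topology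
               \<Rightarrow> (((('a \<Rightarrow> real) \<Rightarrow> real) \<Rightarrow> real) \<Rightarrow> real)
               \<Rightarrow> (((('a \<Rightarrow> real) \<Rightarrow> real) \<Rightarrow> real) \<Rightarrow> real)"
  shows "\<not> (iso_unit_family k \<and> iso_unit_family k' \<and>
            natural k k \<and> natural k k' \<and> natural k' k \<and> natural k' k' \<and>
            (\<forall>X. CH X \<longrightarrow> (\<forall>M\<in>Imeas (IT X).
                k X (zeta X M) = psi X (push (IT X) (JT X) (k X) (k' (IT X) M)))))"
proof
  assume H: "iso_unit_family k \<and> iso_unit_family k' \<and>
            natural k k \<and> natural k k' \<and> natural k' k \<and> natural k' k' \<and>
            (\<forall>X. CH X \<longrightarrow> (\<forall>M\<in>Imeas (IT X).
                k X (zeta X M) = psi X (push (IT X) (JT X) (k X) (k' (IT X) M))))"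
  then have iso: "iso_unit_family k" and natkk': "natural k k'"
    and mon: "\<forall>X. CH X \<longrightarrow> (\<forall>M\<in>Imeas (IT X).
                k X (zeta X M) = psi X (push (IT X) (JT X) (k X) (k' (IT X) M)))" by auto
  obtain a :: 'a where True by simp
  have "UNIV \<noteq> {a}" using infinite_UNIV[where 'a='a] by (metis finite.emptyI finite.insertI)
  then obtain b where ba: "b \<noteq> a" by blast
  define S where "S = {a,b}"
  define X where "X = discrete_topology S"
  have tsX: "topspace X = S" by (simp add: X_def)
  have CX: "Cfun X = extensional S" by (simp add: X_def Cfun_disc)
  have aS: "a \<in> S" and bS: "b \<in> S" by (auto simp: S_def)
  have CHX: "CH X" unfolding CH_def X_def S_def by (simp add: compact_space_discrete_topology)
  have CHI: "CH (IT X)" by (rule CH_IT_disc[of S]) (auto simp: S_def X_def)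
  define m where "m t = restrict (\<lambda>\<phi>. max (\<phi> a) (t + \<phi> b)) (Cfun X)" for t :: real
  have mI: "m t \<in> Imeas X" if "t \<le> 0" for t
    unfolding m_def using two_meas_I[of a X b t] aS bS tsX that by simp
  have dI: "dirac X a \<in> Imeas X"
  proof -
    have "dirac X a = restrict (\<lambda>\<Phi>. max (\<Phi> a) (0 + \<Phi> a)) (Cfun X)"
      by (simp add: dirac_def)
    then show ?thesis using two_meas_I[of a X a 0] aS tsX by simp
  qed
  have dJ: "dirac X a \<in> Jmeas X"
    using aS tsX constX_Cfun[of X] supX_Cfun[of _ X] minX_Cfun[of _ X]
    unfolding Jmeas_def by (auto simp: dirac_def constX_def supX_def minX_def)
  define g where "g x = (if x = a then dirac X a else m (-1))" for x
  have "continuous_map (discrete_topology S) (IT X) g"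
    using dI mI[of "-1"] by (auto simp: ts_IT g_def)
  then have gc: "continuous_map X (IT X) g" by (simp only: X_def)
  define M where "M = push X (IT X) g (m (-1))"
  have M_eq: "M = restrict (\<lambda>\<Phi>. max (\<Phi> (dirac X a)) (-1 + \<Phi> (m (-1)))) (Cfun (IT X))"
  proof
    fix \<Phi>
    show "M \<Phi> = restrict (\<lambda>\<Phi>. max (\<Phi> (dirac X a)) (-1 + \<Phi> (m (-1)))) (Cfun (IT X)) \<Phi>"
    proof (cases "\<Phi> \<in> Cfun (IT X)")
      case True
      have r: "restrict (\<Phi> \<circ> g) (topspace X) \<in> Cfun X" unfolding CX tsX by simp
      show ?thesis using True r aS bS ba unfolding M_def push_def
        by (simp add: m_def tsX g_def)
    next
      case False then show ?thesis by (simp add: M_def push_def)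
    qed
  qed
  have MI: "M \<in> Imeas (IT X)"
    unfolding M_eq using two_meas_I[of "dirac X a" "IT X" "m (-1)" "-1"] dI mI[of "-1"]
    by (simp add: ts_IT)
  have zM: "zeta X M = m (-2)"
  proof
    fix \<phi>
    show "zeta X M \<phi> = m (-2) \<phi>"
    proof (cases "\<phi> \<in> Cfun X")
      case True
      have "zeta X M \<phi> = M (restrict (\<lambda>\<mu>. \<mu> \<phi>) (Imeas X))"
        using True by (simp add: zeta_def)
      also have "\<dots> = max (dirac X a \<phi>) (-1 + m (-1) \<phi>)"
        unfolding M_eq using proj_Cfun_I[OF True] dI mI[of "-1"] by simp
      also have "\<dots> = m (-2) \<phi>"
        using True by (simp add: dirac_def m_def max_def)
      finally show ?thesis .
    next
      case False then show ?thesis by (simp add: zeta_def m_def)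
    qed
  qed
  have hk: "homeomorphic_map (IT X) (JT X) (k X)"
    and kd: "\<forall>x\<in>topspace X. k X (dirac X x) = dirac X x"
    using iso CHX by (auto simp: iso_unit_family_def)
  have kc: "continuous_map (IT X) (JT X) (k X)" using hk homeomorphic_imp_continuous_map by blast
  have kJ: "k X \<mu> \<in> Jmeas X" if "\<mu> \<in> Imeas X" for \<mu>
    using continuous_map_image_subset_topspace[OF kc] that by (auto simp: ts_IT ts_JT)
  define \<nu> where "\<nu> = k X (m (-1))"
  have nuJ: "\<nu> \<in> Jmeas X" unfolding \<nu>_def using kJ mI by simp
  have kda: "k X (dirac X a) = dirac X a" using kd aS tsX by simp
  have nat1: "k' (IT X) M = push X (IT X) g \<nu>"
    unfolding M_def \<nu>_def
    by (rule natkk'[unfolded natural_def, rule_format]) (use CHX CHI gc mI in auto)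
  have RHS: "psi X (push (IT X) (JT X) (k X) (push X (IT X) g \<nu>)) = \<nu>"
  proof
    fix \<phi>
    show "psi X (push (IT X) (JT X) (k X) (push X (IT X) g \<nu>)) \<phi> = \<nu> \<phi>"
    proof (cases "\<phi> \<in> Cfun X")
      case True
      define \<Phi> where "\<Phi> = restrict (\<lambda>\<mu>. \<mu> \<phi>) (Jmeas X)"
      have PhiC: "\<Phi> \<in> Cfun (JT X)" unfolding \<Phi>_def by (rule proj_Cfun_J[OF True])
      define \<Psi> where "\<Psi> = restrict (\<Phi> \<circ> k X) (topspace (IT X))"
      have PsiC: "\<Psi> \<in> Cfun (IT X)" unfolding \<Psi>_def by (rule comp_Cfun[OF kc PhiC])
      have hh: "restrict (\<Psi> \<circ> g) (topspace X) = restrict (\<lambda>x. if x = a then \<phi> a else \<nu> \<phi>) {a,b}"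
      proof
        fix x
        show "restrict (\<Psi> \<circ> g) (topspace X) x = restrict (\<lambda>x. if x = a then \<phi> a else \<nu> \<phi>) {a,b} x"
          using True dI dJ mI[of "-1"] nuJ kda
          by (auto simp: tsX S_def \<Psi>_def \<Phi>_def g_def ts_IT dirac_def \<nu>_def)
      qed
      have "psi X (push (IT X) (JT X) (k X) (push X (IT X) g \<nu>)) \<phi>
          = push (IT X) (JT X) (k X) (push X (IT X) g \<nu>) \<Phi>"
        using True by (simp add: psi_def \<Phi>_def)
      also have "\<dots> = push X (IT X) g \<nu> \<Psi>"
        using PhiC by (simp add: push_def \<Psi>_def)
      also have "\<dots> = \<nu> (restrict (\<Psi> \<circ> g) (topspace X))"
        using PsiC by (simp add: push_def)
      also have "\<dots> = \<nu> \<phi>"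
        unfolding hh by (rule J_two[OF ba[symmetric] _ nuJ True]) (simp add: X_def S_def)
      finally show ?thesis .
    next
      case False then show ?thesis using nuJ by (simp add: psi_def Jmeas_def extensional_def)
    qed
  qed
  have "k X (zeta X M) = psi X (push (IT X) (JT X) (k X) (k' (IT X) M))"
    using mon CHX MI by blast
  then have "k X (m (-2)) = k X (m (-1))"
    unfolding zM nat1 RHS by (simp add: \<nu>_def)
  moreover have "inj_on (k X) (Imeas X)"
    using homeomorphic_imp_injective_map[OF hk] by (simp add: ts_IT)
  ultimately have eqm: "m (-2) = m (-1)" using mI[of "-2"] mI[of "-1"] by (auto dest: inj_onD)
  define \<phi>0 where "\<phi>0 = restrict (\<lambda>x. if x = a then 0 else (5::real)) S"
  have "\<phi>0 \<in> Cfun X" unfolding CX \<phi>0_def by simp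
  then have "m (-2) \<phi>0 = 3" "m (-1) \<phi>0 = 4"
    using aS bS ba by (auto simp: m_def \<phi>0_def)
  with eqm show False by simp
qed

end
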